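(* Let $G$ be a finite simple graph with vertices in $\mathbb{N}$ and let $G_1,\ldots,G_m$ be its connected components. Then the independence complex $\Delta(G)$ is sortable if and only if each $\Delta(G_r)$, $r=1,\dots,m$, is sortable.
   Context: The independence complex $\Delta(G)$ of a graph $G$ is the simplicial complex of all independent sets of vertices of $G$ (sets containing no edge). For finite $F,G\subset\mathbb{N}$ with $|F|=r,|G|=s$, write $\mathbf{x}^F\mathbf{x}^G=x_{i_1}\cdots x_{i_{r+s}}$ with $i_1\le\cdots\le i_{r+s}$ (where $\mathbf{x}^F=\prod_{i\in F}x_i$) and set $\mathrm{sort}(F,G)=(\{i_k:k\text{ odd}\},\{i_k:k\text{ even}\})$. A simplicial complex $\Delta$ with $V(\Delta)\subset\mathbb{N}$ is sortable with respect to the given labeling if $\mathrm{sort}(F,G)\in\Delta\times\Delta$ for all $F,G\in\Delta$; it is sortable if it is sortable with respect to some labeling of its vertices by distinct integers. *)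

theory Defs
  imports Main
begin

definition simple_graph :: "nat set \<Rightarrow> nat set set \<Rightarrow> bool" where
  "simple_graph V E \<longleftrightarrow> finite V \<and> (\<forall>e\<in>E. e \<subseteq> V \<and> card e = 2)"

definition indep_complex :: "nat set \<Rightarrow> nat set set \<Rightarrow> nat set set" where
  "indep_complex V E = {F. F \<subseteq> V \<and> (\<forall>e\<in>E. \<not> e \<subseteq> F)}"

definition adj :: "nat set set \<Rightarrow> nat \<Rightarrow> nat \<Rightarrow> bool" where
  "adj E u v \<longleftrightarrow> {u, v} \<in> E"

definition components :: "nat set \<Rightarrow> nat set set \<Rightarrow> nat set set" where
  "components V E = {{w \<in> V. (adj E)\<^sup>*\<^sup>* v w} | v. v \<in> V}"

definition induced_edges :: "nat set set \<Rightarrow> nat set \<Rightarrow> nat set set" where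
  "induced_edges E C = {e \<in> E. e \<subseteq> C}"

text \<open>sort(F,G): sort the multiset union, odd positions (1-based) to the first
  set, even positions to the second.\<close>
definition sort_pair :: "nat set \<Rightarrow> nat set \<Rightarrow> nat set \<times> nat set" where
  "sort_pair F G =
     (let xs = sort (sorted_list_of_set F @ sorted_list_of_set G)
      in ({xs ! k | k. k < length xs \<and> even k}, {xs ! k | k. k < length xs \<and> odd k}))"

definition sortable_wrt :: "nat set set \<Rightarrow> bool" where
  "sortable_wrt \<Delta> \<longleftrightarrow>
     (\<forall>F\<in>\<Delta>. \<forall>G\<in>\<Delta>. fst (sort_pair F G) \<in> \<Delta> \<and> snd (sort_pair F G) \<in> \<Delta>)"

text \<open>Sortable: sortable w.r.t. some relabelling of the vertices by distinct integers
  (here naturals; only the relative order matters).\<close>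
definition sortable :: "nat set set \<Rightarrow> bool" where
  "sortable \<Delta> \<longleftrightarrow> (\<exists>f :: nat \<Rightarrow> nat. inj_on f (\<Union>\<Delta>) \<and> sortable_wrt ((\<lambda>F. f ` F) ` \<Delta>))"

end

theory Submission imports Defs begin

definition cnt :: "nat set \<Rightarrow> nat set \<Rightarrow> nat \<Rightarrow> nat" where
  "cnt A B x = card {y\<in>A. y<x} + card {y\<in>B. y<x}"

definition sp :: "bool \<Rightarrow> nat set \<Rightarrow> nat set \<Rightarrow> nat set" where
  "sp b A B = {x. x\<in>A \<and> x\<in>B} \<union> {x. (x\<in>A) \<noteq> (x\<in>B) \<and> (even (cnt A B x) = b)}"

lemma len_filter_sls: "finite A \<Longrightarrow> length (filter P (sorted_list_of_set A)) = card {y\<in>A. P y}"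
proof -
  assume "finite A"
  have "length (filter P (sorted_list_of_set A)) = card (set (filter P (sorted_list_of_set A)))"
    by (metis distinct_card distinct_filter distinct_sorted_list_of_set)
  also have "set (filter P (sorted_list_of_set A)) = {y\<in>A. P y}" using \<open>finite A\<close> by auto
  finally show ?thesis .
qed

lemma idx_set:
  assumes fA: "finite A" and fB: "finite B"
  defines "xs \<equiv> sort (sorted_list_of_set A @ sorted_list_of_set B)"
  shows "{k. k < length xs \<and> xs!k = x} = {cnt A B x..<cnt A B x + ((if x\<in>A then 1 else 0) + (if x\<in>B then 1 else 0))}"
proof -
  define L where "L = sorted_list_of_set A @ sorted_list_of_set B"
  have xsL: "xs = sort L" unfolding xs_def L_def ..
  have lf: "length (filter P xs) = card {y\<in>A. P y} + card {y\<in>B. P y}" for P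
    unfolding xsL L_def filter_sort by (simp add: len_filter_sls fA fB)
  define p where "p = cnt A B x"
  define c where "c = (if x\<in>A then 1 else 0) + (if x\<in>B then (1::nat) else 0)"
  have srt: "sorted xs" unfolding xs_def by simp
  have Lt: "card {k. k < length xs \<and> xs!k < x} = p"
    using lf[of "\<lambda>y. y < x"] by (simp add: length_filter_conv_card p_def cnt_def)
  have "{y\<in>A. y = x} = (if x\<in>A then {x} else {})" "{y\<in>B. y = x} = (if x\<in>B then {x} else {})" by auto
  hence cA: "card {y\<in>A. y = x} = (if x\<in>A then 1 else 0)" and cB: "card {y\<in>B. y = x} = (if x\<in>B then 1 else 0)" by auto
  have Eq: "card {k. k < length xs \<and> xs!k = x} = c"
    using lf[of "\<lambda>y. y = x"] cA cB by (simp add: length_filter_conv_card c_def)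
  have "{k. k < length xs \<and> xs!k \<le> x} = {k. k < length xs \<and> xs!k < x} \<union> {k. k < length xs \<and> xs!k = x}"
    by auto
  moreover have "card ({k. k < length xs \<and> xs!k < x} \<union> {k. k < length xs \<and> xs!k = x}) = p + c"
    using Lt Eq by (subst card_Un_disjoint) auto
  ultimately have Le: "card {k. k < length xs \<and> xs!k \<le> x} = p + c" by simp
  have sub: "{k. k < length xs \<and> xs!k = x} \<subseteq> {p..<p+c}"
  proof
    fix k assume k: "k \<in> {k. k < length xs \<and> xs!k = x}"
    have "{k. k < length xs \<and> xs!k < x} \<subseteq> {..<k}"
    proof
      fix j assume j: "j \<in> {k. k < length xs \<and> xs!k < x}"
      show "j \<in> {..<k}"
      proof (rule ccontr)
        assume "j \<notin> {..<k}"
        hence "k \<le> j" by simp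
        hence "xs!k \<le> xs!j" using srt j by (auto simp: sorted_iff_nth_mono)
        thus False using j k by auto
      qed
    qed
    hence "p \<le> k" using Lt card_mono[of "{..<k}"] by fastforce
    moreover have "{..k} \<subseteq> {k. k < length xs \<and> xs!k \<le> x}"
    proof
      fix j assume "j \<in> {..k}"
      hence "j \<le> k" by simp
      thus "j \<in> {k. k < length xs \<and> xs!k \<le> x}" using srt k by (auto simp: sorted_iff_nth_mono)
    qed
    hence "Suc k \<le> p + c" using Le card_mono[of "{k. k < length xs \<and> xs!k \<le> x}" "{..k}"] by fastforce
    ultimately show "k \<in> {p..<p+c}" by simp
  qed
  have "{k. k < length xs \<and> xs!k = x} = {p..<p+c}"
    by (rule card_subset_eq) (use sub Eq in auto)
  thus ?thesis unfolding p_def c_def .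
qed

lemma sort_pair_char:
  assumes fA: "finite A" and fB: "finite B"
  shows "sort_pair A B = (sp True A B, sp False A B)"
proof -
  define xs where "xs = sort (sorted_list_of_set A @ sorted_list_of_set B)"
  have I: "{k. k < length xs \<and> xs!k = x} = {cnt A B x..<cnt A B x + ((if x\<in>A then 1 else 0) + (if x\<in>B then 1 else 0))}" for x
    unfolding xs_def by (rule idx_set[OF fA fB])
  have mem: "x \<in> {xs ! k | k. k < length xs \<and> P k} \<longleftrightarrow>
     (\<exists>k\<in>{cnt A B x..<cnt A B x + ((if x\<in>A then 1 else 0) + (if x\<in>B then 1 else 0))}. P k)" for x P
  proof -
    have "x \<in> {xs ! k | k. k < length xs \<and> P k} \<longleftrightarrow> (\<exists>k\<in>{k. k < length xs \<and> xs!k = x}. P k)" by auto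
    thus ?thesis by (simp only: I)
  qed
  have e: "(\<exists>k\<in>{p..<p + ((if a then 1 else 0) + (if b then 1 else 0))}. even k = bb) \<longleftrightarrow>
     (a \<and> b) \<or> (a \<noteq> b \<and> even p = bb)" for p :: nat and a b bb
  proof (cases a; cases b)
    assume "a" "b"
    hence "{p..<p + ((if a then 1 else 0) + (if b then 1 else 0))} = {p, Suc p}" by auto
    thus ?thesis using \<open>a\<close> \<open>b\<close> by auto
  qed auto
  show ?thesis unfolding sort_pair_def Let_def xs_def[symmetric]
  proof (simp only: prod.inject, intro conjI)
    show "{xs ! k |k. k < length xs \<and> even k} = sp True A B"
      using mem[of _ even] e[of _ _ _ True] by (auto simp: sp_def)
    show "{xs ! k |k. k < length xs \<and> odd k} = sp False A B"
      using mem[of _ odd] e[of _ _ _ False] by (auto simp: sp_def)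
  qed
qed

lemma sp_subset: "sp b A B \<subseteq> A \<union> B" by (auto simp: sp_def)

lemma sp_block:
  assumes fA: "finite A" and fB: "finite B"
    and blk: "\<forall>y\<in>(A\<union>B)-T. (\<forall>t\<in>T. y<t) \<or> (\<forall>t\<in>T. t<y)"
  shows "\<exists>b'. sp b A B \<inter> T = sp b' (A\<inter>T) (B\<inter>T)"
proof -
  define K where "K = card {y\<in>A-T. \<forall>t\<in>T. y<t} + card {y\<in>B-T. \<forall>t\<in>T. y<t}"
  have split: "card {y\<in>X. y<x} = card {y\<in>X\<inter>T. y<x} + card {y\<in>X-T. \<forall>t\<in>T. y<t}"
    if "x \<in> T" "finite X" "X \<subseteq> A \<union> B" for X x
  proof -
    have "{y\<in>X. y<x} = {y\<in>X\<inter>T. y<x} \<union> {y\<in>X-T. \<forall>t\<in>T. y<t}"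
    proof (intro equalityI subsetI)
      fix y assume y: "y \<in> {y\<in>X. y<x}"
      show "y \<in> {y\<in>X\<inter>T. y<x} \<union> {y\<in>X-T. \<forall>t\<in>T. y<t}"
      proof (cases "y \<in> T")
        case False
        hence "(\<forall>t\<in>T. y<t) \<or> (\<forall>t\<in>T. t<y)" using blk y that by auto
        thus ?thesis using y False that(1) by fastforce
      qed (use y in auto)
    qed (use that in auto)
    moreover have "card ({y\<in>X\<inter>T. y<x} \<union> {y\<in>X-T. \<forall>t\<in>T. y<t}) = card {y\<in>X\<inter>T. y<x} + card {y\<in>X-T. \<forall>t\<in>T. y<t}"
      by (rule card_Un_disjoint) (use that in auto)
    ultimately show ?thesis by simp
  qed
  have c: "cnt A B x = cnt (A\<inter>T) (B\<inter>T) x + K" if "x \<in> T" for x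
    using split[OF that fA] split[OF that fB] unfolding cnt_def K_def by simp
  show ?thesis
  proof (intro exI[of _ "b = even K"] equalityI subsetI)
    fix x assume "x \<in> sp b A B \<inter> T"
    thus "x \<in> sp (b = even K) (A \<inter> T) (B \<inter> T)" using c[of x] by (auto simp: sp_def)
  next
    fix x assume x: "x \<in> sp (b = even K) (A \<inter> T) (B \<inter> T)"
    hence "x \<in> T" by (auto simp: sp_def)
    thus "x \<in> sp b A B \<inter> T" using x c[of x] by (auto simp: sp_def)
  qed
qed

lemma sp_shift:
  "sp b ((\<lambda>y. y + c) ` A) ((\<lambda>y. y + c) ` B) = (\<lambda>y. y + c) ` sp b A B"
proof -
  have cc: "cnt ((\<lambda>y. y + c) ` A) ((\<lambda>y. y + c) ` B) (x + c) = cnt A B x" for x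
  proof -
    have "{y \<in> (\<lambda>y. y + c) ` X. y < x + c} = (\<lambda>y. y + c) ` {y\<in>X. y < x}" for X by auto
    hence "card {y \<in> (\<lambda>y. y + c) ` X. y < x + c} = card {y\<in>X. y < x}" for X
      by (simp add: card_image inj_on_def)
    thus ?thesis unfolding cnt_def by simp
  qed
  show ?thesis
  proof (intro equalityI subsetI)
    fix z assume z: "z \<in> sp b ((\<lambda>y. y + c) ` A) ((\<lambda>y. y + c) ` B)"
    then obtain x where x: "z = x + c" using sp_subset by blast
    show "z \<in> (\<lambda>y. y + c) ` sp b A B" using z cc[of x] unfolding x by (auto simp: sp_def)
  next
    fix z assume "z \<in> (\<lambda>y. y + c) ` sp b A B"
    then obtain x where x: "z = x + c" "x \<in> sp b A B" by blast
    thus "z \<in> sp b ((\<lambda>y. y + c) ` A) ((\<lambda>y. y + c) ` B)" using cc[of x] by (auto simp: sp_def)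
  qed
qed

lemma sortable_wrt_sp:
  assumes "\<forall>F\<in>D. finite F"
  shows "sortable_wrt D \<longleftrightarrow> (\<forall>F\<in>D. \<forall>G\<in>D. \<forall>b. sp b F G \<in> D)"
proof -
  have "(fst (sort_pair F G) \<in> D \<and> snd (sort_pair F G) \<in> D) \<longleftrightarrow> (\<forall>b. sp b F G \<in> D)"
    if "F \<in> D" "G \<in> D" for F G
    using sort_pair_char[of F G] assms that by (metis (full_types) fst_conv snd_conv)
  thus ?thesis unfolding sortable_wrt_def by blast
qed

lemma union_indep: "\<forall>e\<in>E'. card e = 2 \<Longrightarrow> \<Union> (indep_complex W E') = W"
proof (intro equalityI subsetI)
  fix x assume "x \<in> W" "\<forall>e\<in>E'. card e = 2"
  hence "{x} \<in> indep_complex W E'"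
    unfolding indep_complex_def by (auto dest!: subset_singletonD)
  thus "x \<in> \<Union> (indep_complex W E')" by blast
qed (auto simp: indep_complex_def)

definition compo :: "nat set \<Rightarrow> nat set set \<Rightarrow> nat \<Rightarrow> nat set" where
  "compo V E v = {w\<in>V. (adj E)\<^sup>*\<^sup>* v w}"

context
  fixes V E assumes sg: "simple_graph V E"
begin

lemma adj_sym: "adj E u v \<Longrightarrow> adj E v u" by (simp add: adj_def insert_commute)

lemma rt_sym: "(adj E)\<^sup>*\<^sup>* u v \<Longrightarrow> (adj E)\<^sup>*\<^sup>* v u"
proof (induction rule: rtranclp.induct)
  case (rtrancl_into_rtrancl a b c)
  thus ?case by (meson adj_sym converse_rtranclp_into_rtranclp)
qed simp

lemma comps_iff: "C \<in> components V E \<longleftrightarrow> (\<exists>v\<in>V. C = compo V E v)"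
  unfolding components_def compo_def by blast

lemma compo_self: "v \<in> V \<Longrightarrow> v \<in> compo V E v" by (simp add: compo_def)

lemma compo_eq: "w \<in> compo V E v \<Longrightarrow> compo V E w = compo V E v"
  unfolding compo_def by (auto intro: rtranclp_trans rt_sym)

lemma comp_of: "C \<in> components V E \<Longrightarrow> v \<in> C \<Longrightarrow> C = compo V E v"
  using comps_iff compo_eq by metis

lemma comp_sub: "C \<in> components V E \<Longrightarrow> C \<subseteq> V"
  using comps_iff compo_def by auto

lemma comp_disj: "C \<in> components V E \<Longrightarrow> D \<in> components V E \<Longrightarrow> x \<in> C \<Longrightarrow> x \<in> D \<Longrightarrow> C = D"
  using comp_of by metis

lemma compo_in: "v \<in> V \<Longrightarrow> compo V E v \<in> components V E"
  using comps_iff by blast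

lemma finV: "finite V" using sg by (simp add: simple_graph_def)

lemma fin_comps: "finite (components V E)"
proof -
  have "components V E = compo V E ` V" using comps_iff by auto
  thus ?thesis using finV by simp
qed

lemma edge_comp: "e \<in> E \<Longrightarrow> \<exists>C\<in>components V E. e \<subseteq> C"
proof -
  assume e: "e \<in> E"
  hence "e \<subseteq> V" "card e = 2" using sg by (auto simp: simple_graph_def)
  then obtain u w where uw: "e = {u, w}" "u \<noteq> w" by (auto simp: card_2_iff)
  hence "adj E u w" using e by (simp add: adj_def)
  hence "e \<subseteq> compo V E u" using uw \<open>e \<subseteq> V\<close> by (auto simp: compo_def)
  thus ?thesis using compo_in \<open>e \<subseteq> V\<close> uw by auto
qed

lemma DC_iff: "C \<subseteq> V \<Longrightarrow> F \<in> indep_complex C (induced_edges E C) \<longleftrightarrow> F \<subseteq> C \<and> F \<in> indep_complex V E"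
  unfolding indep_complex_def induced_edges_def by blast

lemma union_D: "\<Union> (indep_complex V E) = V"
  using sg by (intro union_indep) (simp add: simple_graph_def)

lemma union_DC: "\<Union> (indep_complex C (induced_edges E C)) = C"
  using sg by (intro union_indep) (simp add: simple_graph_def induced_edges_def)

end

theorem corollary1p5:
  assumes "simple_graph V E"
  shows "sortable (indep_complex V E) \<longleftrightarrow>
         (\<forall>C\<in>components V E. sortable (indep_complex C (induced_edges E C)))"
proof
  let ?D = "indep_complex V E"
  have finD: "\<forall>F\<in>?D. finite F" using finV[OF assms] by (auto simp: indep_complex_def intro: finite_subset)
  assume "sortable ?D"
  then obtain f where inj: "inj_on f V" and sw: "sortable_wrt ((\<lambda>F. f ` F) ` ?D)"
    unfolding sortable_def union_D[OF assms] by blast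
  have sw': "\<forall>F\<in>?D. \<forall>G\<in>?D. \<forall>b. sp b (f`F) (f`G) \<in> (\<lambda>F. f ` F) ` ?D"
    using sw sortable_wrt_sp[of "(\<lambda>F. f ` F) ` ?D"] finD by auto
  show "\<forall>C\<in>components V E. sortable (indep_complex C (induced_edges E C))"
  proof
    fix C assume C: "C \<in> components V E"
    let ?DC = "indep_complex C (induced_edges E C)"
    have CV: "C \<subseteq> V" using comp_sub[OF assms C] .
    have "\<forall>X\<in>(\<lambda>F. f ` F) ` ?DC. \<forall>Y\<in>(\<lambda>F. f ` F) ` ?DC. \<forall>b. sp b X Y \<in> (\<lambda>F. f ` F) ` ?DC"
    proof (intro ballI allI)
      fix X Y b assume "X \<in> (\<lambda>F. f ` F) ` ?DC" "Y \<in> (\<lambda>F. f ` F) ` ?DC"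
      then obtain F G where FG: "X = f`F" "Y = f`G" "F \<in> ?DC" "G \<in> ?DC" by blast
      hence FG': "F \<in> ?D" "G \<in> ?D" "F \<subseteq> C" "G \<subseteq> C" using DC_iff[OF assms CV] by auto
      obtain H where H: "sp b X Y = f`H" "H \<in> ?D" using sw' FG' FG by blast
      have "H \<subseteq> C"
      proof
        fix h assume h: "h \<in> H"
        hence "f h \<in> f`F \<union> f`G" using H sp_subset FG by blast
        then obtain c where "c \<in> C" "f h = f c" using FG' by blast
        moreover have "h \<in> V" using H h by (auto simp: indep_complex_def)
        ultimately show "h \<in> C" using inj CV by (metis inj_on_def subsetD)
      qed
      hence "H \<in> ?DC" using DC_iff[OF assms CV] H by auto
      thus "sp b X Y \<in> (\<lambda>F. f ` F) ` ?DC" using H by blast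
    qed
    moreover have "\<forall>F\<in>(\<lambda>F. f ` F) ` ?DC. finite F"
      using finV[OF assms] CV by (auto simp: indep_complex_def intro: finite_subset)
    ultimately have "sortable_wrt ((\<lambda>F. f ` F) ` ?DC)" using sortable_wrt_sp by blast
    moreover have "inj_on f (\<Union> ?DC)" using union_DC[OF assms] inj CV by (simp add: inj_on_subset)
    ultimately show "sortable ?DC" unfolding sortable_def by blast
  qed
next
  let ?D = "indep_complex V E"
  let ?DC = "\<lambda>C. indep_complex C (induced_edges E C)"
  let ?cs = "components V E"
  assume "\<forall>C\<in>?cs. sortable (?DC C)"
  then obtain fs where fs: "\<And>C. C \<in> ?cs \<Longrightarrow> inj_on (fs C) C \<and> sortable_wrt ((\<lambda>F. fs C ` F) ` ?DC C)"
    unfolding sortable_def union_DC[OF assms] by metis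
  define cp where "cp = compo V E"
  define M where "M = Suc (Max (\<Union>C\<in>?cs. fs C ` C))"
  define g where "g v = M * Min (cp v) + fs (cp v) v" for v
  have finV: "finite V" using finV[OF assms] .
  have cpin: "v \<in> V \<Longrightarrow> cp v \<in> ?cs" for v using compo_in[OF assms] cp_def by simp
  have cpself: "v \<in> V \<Longrightarrow> v \<in> cp v" for v using compo_self[OF assms] cp_def by simp
  have cpC: "C \<in> ?cs \<Longrightarrow> v \<in> C \<Longrightarrow> cp v = C" for C v using comp_of[OF assms] cp_def by metis
  have finC: "C \<in> ?cs \<Longrightarrow> finite C" for C using comp_sub[OF assms] finV finite_subset by metis
  have minC: "C \<in> ?cs \<Longrightarrow> Min C \<in> C" for C using finC cpself comps_iff[OF assms]
    by (metis Min_in cp_def empty_iff)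
  have lt: "v \<in> V \<Longrightarrow> fs (cp v) v < M" for v
  proof -
    assume v: "v \<in> V"
    have "finite (\<Union>C\<in>?cs. fs C ` C)" using fin_comps[OF assms] finC by blast
    moreover have "fs (cp v) v \<in> (\<Union>C\<in>?cs. fs C ` C)" using cpin[OF v] cpself[OF v] by blast
    ultimately show ?thesis unfolding M_def using Max_ge le_imp_less_Suc by blast
  qed
  have gord: "u \<in> V \<Longrightarrow> v \<in> V \<Longrightarrow> Min (cp u) < Min (cp v) \<Longrightarrow> g u < g v" for u v
  proof -
    assume uv: "u \<in> V" "v \<in> V" "Min (cp u) < Min (cp v)"
    have "g u < M * Min (cp u) + M" using lt[OF uv(1)] by (simp add: g_def)
    also have "\<dots> = M * Suc (Min (cp u))" by simp
    also have "\<dots> \<le> M * Min (cp v)" using uv(3) by (intro mult_le_mono2) simp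
    also have "\<dots> \<le> g v" by (simp add: g_def)
    finally show ?thesis .
  qed
  have cpeq: "u \<in> V \<Longrightarrow> v \<in> V \<Longrightarrow> Min (cp u) = Min (cp v) \<Longrightarrow> cp u = cp v" for u v
    using minC cpin comp_disj[OF assms] by metis
  have injg: "inj_on g V"
  proof (rule inj_onI)
    fix u v assume uv: "u \<in> V" "v \<in> V" "g u = g v"
    have "Min (cp u) = Min (cp v)" using gord[of u v] gord[of v u] uv by (metis less_irrefl nat_neq_iff)
    hence c: "cp u = cp v" using cpeq uv by blast
    hence "fs (cp u) u = fs (cp u) v" using uv by (simp add: g_def)
    moreover have "inj_on (fs (cp u)) (cp u)" using fs cpin uv by blast
    ultimately show "u = v" using cpself uv c by (metis inj_onD)
  qed
  have finD: "\<forall>F\<in>?D. finite F" using finV by (auto simp: indep_complex_def intro: finite_subset)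
  have "\<forall>X\<in>(\<lambda>F. g ` F) ` ?D. \<forall>Y\<in>(\<lambda>F. g ` F) ` ?D. \<forall>b. sp b X Y \<in> (\<lambda>F. g ` F) ` ?D"
  proof (intro ballI allI)
    fix X Y b assume "X \<in> (\<lambda>F. g ` F) ` ?D" "Y \<in> (\<lambda>F. g ` F) ` ?D"
    then obtain F G where FG: "X = g`F" "Y = g`G" "F \<in> ?D" "G \<in> ?D" by blast
    have FGV: "F \<subseteq> V" "G \<subseteq> V" using FG by (auto simp: indep_complex_def)
    define S where "S = sp b X Y"
    define H where "H = {v\<in>V. g v \<in> S}"
    have SH: "S = g ` H" using sp_subset[of b X Y] FG FGV unfolding S_def H_def by blast
    have "H \<in> ?D" unfolding indep_complex_def
    proof (intro CollectI conjI ballI notI)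
      show "H \<subseteq> V" unfolding H_def by blast
    next
      fix e assume e: "e \<in> E" "e \<subseteq> H"
      obtain C where C: "C \<in> ?cs" "e \<subseteq> C" using edge_comp[OF assms e(1)] by blast
      have CV: "C \<subseteq> V" using comp_sub[OF assms C(1)] .
      define sh where "sh y = y + M * Min C" for y
      have gC: "v \<in> C \<Longrightarrow> g v = sh (fs C v)" for v using cpC[OF C(1)] by (simp add: g_def sh_def)
      have gimg: "K \<subseteq> C \<Longrightarrow> g ` K = sh ` fs C ` K" for K 
      proof -
        assume "K \<subseteq> C"
        hence "\<forall>v\<in>K. g v = (sh \<circ> fs C) v" using gC by auto
        hence "g ` K = (sh \<circ> fs C) ` K" by (intro image_cong) auto
        thus ?thesis by (simp add: image_comp)
      qed
      have blk: "\<forall>y\<in>(X\<union>Y)-g`C. (\<forall>t\<in>g`C. y<t) \<or> (\<forall>t\<in>g`C. t<y)"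
      proof
        fix y assume y: "y \<in> (X\<union>Y)-g`C"
        then obtain u where u: "u \<in> V" "y = g u" "u \<notin> C" using FG FGV by blast
        have "cp u \<noteq> C" using u cpself by blast
        hence "Min (cp u) \<noteq> Min C" using cpeq[of u "Min C"] minC[OF C(1)] CV u cpC[OF C(1)] by auto
        hence "Min (cp u) < Min C \<or> Min C < Min (cp u)" by auto
        thus "(\<forall>t\<in>g`C. y<t) \<or> (\<forall>t\<in>g`C. t<y)"
          using gord[of u] gord[of _ u] u CV cpC[OF C(1)] by auto
      qed
      have finXY: "finite X" "finite Y" using FG finD by auto
      obtain b' where b': "S \<inter> g`C = sp b' (X \<inter> g`C) (Y \<inter> g`C)"
        using sp_block[OF finXY blk] S_def by blast
      have XC: "X \<inter> g`C = g`(F\<inter>C)" "Y \<inter> g`C = g`(G\<inter>C)"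
        using FG FGV CV injg by (simp_all add: inj_on_image_Int)
      have shd: "sh = (\<lambda>y. y + M * Min C)" unfolding sh_def ..
      have SC: "S \<inter> g`C = sh ` sp b' (fs C ` (F\<inter>C)) (fs C ` (G\<inter>C))"
      proof -
        have "S \<inter> g`C = sp b' (sh ` fs C ` (F\<inter>C)) (sh ` fs C ` (G\<inter>C))"
          unfolding b' XC gimg[of "F\<inter>C", OF Int_lower2] gimg[of "G\<inter>C", OF Int_lower2] ..
        also have "\<dots> = sh ` sp b' (fs C ` (F\<inter>C)) (fs C ` (G\<inter>C))"
          unfolding shd by (rule sp_shift)
        finally show ?thesis .
      qed
      have FC: "F\<inter>C \<in> ?DC C" "G\<inter>C \<in> ?DC C" using DC_iff[OF assms CV] FG
        by (auto simp: indep_complex_def)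
      have "\<forall>P\<in>(\<lambda>F. fs C ` F) ` ?DC C. finite P"
      proof
        fix P assume "P \<in> (\<lambda>F. fs C ` F) ` ?DC C"
        then obtain F0 where "P = fs C ` F0" "F0 \<subseteq> C" by (auto simp: indep_complex_def)
        thus "finite P" using finC[OF C(1)] finite_subset by blast
      qed
      hence all: "\<forall>P\<in>(\<lambda>F. fs C ` F) ` ?DC C. \<forall>Q\<in>(\<lambda>F. fs C ` F) ` ?DC C. \<forall>b. sp b P Q \<in> (\<lambda>F. fs C ` F) ` ?DC C"
        using fs[OF C(1)] sortable_wrt_sp[of "(\<lambda>F. fs C ` F) ` ?DC C"] by simp
      have "sp b' (fs C ` (F\<inter>C)) (fs C ` (G\<inter>C)) \<in> (\<lambda>F. fs C ` F) ` ?DC C"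
        using all FC by (meson imageI)
      then obtain K where K1: "K \<in> ?DC C" and K1': "sp b' (fs C ` (F\<inter>C)) (fs C ` (G\<inter>C)) = fs C ` K"
        by blast
      have K: "K \<in> ?DC C" "S \<inter> g`C = sh ` fs C ` K" using K1 K1' SC by auto
      have KC: "K \<subseteq> C" using K(1) by (auto simp: indep_complex_def)
      have "e \<subseteq> K"
      proof
        fix x assume x: "x \<in> e"
        hence "g x \<in> S \<inter> g`C" using e C H_def by blast
        hence "g x \<in> g ` K" using K(2) gimg[OF KC] by simp
        then obtain k where "k \<in> K" "g x = g k" by blast
        thus "x \<in> K" using injg KC CV x C by (metis inj_onD subsetD)
      qed
      moreover have "e \<in> induced_edges E C" using e C by (simp add: induced_edges_def)
      ultimately show False using K(1) by (auto simp: indep_complex_def)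
    qed
    thus "sp b X Y \<in> (\<lambda>F. g ` F) ` ?D" using SH S_def by blast
  qed
  moreover have "\<forall>F\<in>(\<lambda>F. g ` F) ` ?D. finite F" using finD by auto
  ultimately have "sortable_wrt ((\<lambda>F. g ` F) ` ?D)" using sortable_wrt_sp by blast
  thus "sortable ?D" unfolding sortable_def union_D[OF assms] using injg by blast
qed

end
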